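(* Let ${\bf A}=(a(i,j))$ be a real $n\times n$ matrix with no zero row, and suppose the associated matrix ${\bf A}_{\rm sde}$ has $1$ as a simple eigenvalue and all other eigenvalues in the open unit complex disk. Let ${\bf a}_{\rm sde}\in\mathbb{R}^{2n}$ be the vector with ${\bf a}_{\rm sde}^T{\bf A}_{\rm sde}={\bf a}_{\rm sde}^T$ and ${\bf a}_{\rm sde}^T{\bf 1}_{2n}=1$, let ${\bf w}=(w_1,\dots,w_n,w_1,\dots,w_n)^T$ and $\tilde w={\bf a}_{\rm sde}^T{\bf w}$. Then $$0<\min_{1\le i\le n}w_i\le\tilde w\le\max_{1\le i\le n}w_i.$$
   Context: $t_+=\max(t,0)$; $w_i=\big(\sum_{j=1}^n|a(i,j)|\big)^{-1}$; $\tilde a(i,j)=w_ia(i,j)$; $\tilde{\bf A}_+=\big((\tilde a(i,j))_+\big)$, $\tilde{\bf A}_-=\big((-\tilde a(i,j))_+\big)$; ${\bf A}_{\rm sde}=\begin{pmatrix}\tilde{\bf A}_+&\tilde{\bf A}_-\\ \tilde{\bf A}_+&\tilde{\bf A}_-\end{pmatrix}$; ${\bf 1}_{2n}$ is the all-ones vector. *)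

theory Defs
  imports "Jordan_Normal_Form.Char_Poly" "HOL-Computational_Algebra.Polynomial"
begin

definition row_weight :: "real mat \<Rightarrow> nat \<Rightarrow> real" where
  "row_weight A i = inverse (\<Sum>j<dim_col A. \<bar>A $$ (i,j)\<bar>)"

definition A_tilde :: "real mat \<Rightarrow> real mat" where
  "A_tilde A = mat (dim_row A) (dim_col A) (\<lambda>(i,j). row_weight A i * A $$ (i,j))"

definition A_tilde_plus :: "real mat \<Rightarrow> real mat" where
  "A_tilde_plus A = mat (dim_row A) (dim_col A) (\<lambda>(i,j). max (A_tilde A $$ (i,j)) 0)"

definition A_tilde_minus :: "real mat \<Rightarrow> real mat" where
  "A_tilde_minus A = mat (dim_row A) (dim_col A) (\<lambda>(i,j). max (- (A_tilde A $$ (i,j))) 0)"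

definition A_sde :: "real mat \<Rightarrow> real mat" where
  "A_sde A = four_block_mat (A_tilde_plus A) (A_tilde_minus A) (A_tilde_plus A) (A_tilde_minus A)"

definition simple_eigenvalue :: "complex mat \<Rightarrow> complex \<Rightarrow> bool" where
  "simple_eigenvalue M z \<longleftrightarrow> eigenvalue M z \<and> order z (char_poly M) = 1"

end

theory Submission
  imports Defs Jordan_Normal_Form.Jordan_Normal_Form_Existence Jordan_Normal_Form.Jordan_Normal_Form_Uniqueness
begin


lemma geo_le_alg:
  fixes M :: "complex mat"
  assumes M: "M \<in> carrier_mat N N"
  shows "dim_gen_eigenspace M e 1 \<le> Polynomial.order e (char_poly M)"
proof -
  from char_poly_factorized[OF M] obtain as where "char_poly M = (\<Prod> a \<leftarrow> as. [:- a, 1:])" by auto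
  from jordan_nf_exists[OF M this] obtain n_as where j: "jordan_nf M n_as" by blast
  have "dim_gen_eigenspace M e 1 = (\<Sum> n \<leftarrow> map fst [(n, x)\<leftarrow>n_as . x = e]. min 1 n)"
    by (rule dim_gen_eigenspace[OF j])
  also have "\<dots> \<le> (\<Sum> n \<leftarrow> map fst [(n, x)\<leftarrow>n_as . x = e]. n)"
    by (rule sum_list_mono) auto
  also have "\<dots> = Polynomial.order e (char_poly M)"
    unfolding jordan_nf_order[OF j] by (induct n_as) auto
  finally show ?thesis .
qed

lemma two_indep_false:
  fixes M :: "complex mat"
  assumes M: "M \<in> carrier_mat N N"
    and ord: "Polynomial.order 1 (char_poly M) = 1"
    and p: "p \<in> carrier_vec N" and q: "q \<in> carrier_vec N"
    and Mp: "M *\<^sub>v p = p" and Mq: "M *\<^sub>v q = q"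
    and i: "i < N" and j: "j < N"
    and pi: "p $ i \<noteq> 0" and qi: "q $ i = 0" and qj: "q $ j \<noteq> 0" and pj: "p $ j = 0"
  shows False
proof -
  define C where "C = char_matrix M 1 ^\<^sub>m 1"
  have CM: "C = M - 1\<^sub>m N"
    unfolding C_def char_matrix_def using M by (auto intro!: eq_matI)
  have C: "C \<in> carrier_mat N N" using CM M by auto
  interpret K: kernel N N C by (unfold_locales, rule C)
  have dimle: "K.Ker.dim \<le> 1"
    using geo_le_alg[OF M, of 1] ord unfolding dim_gen_eigenspace_def C_def[symmetric] by simp
  have ker: "v \<in> mat_kernel C" if "v \<in> carrier_vec N" "M *\<^sub>v v = v" for v
  proof (rule mat_kernelI[OF C that(1)])
    have "C *\<^sub>v v = M *\<^sub>v v - 1\<^sub>m N *\<^sub>v v" unfolding CM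
      by (rule minus_mult_distrib_mat_vec[OF M _ that(1)]) auto
    then show "C *\<^sub>v v = 0\<^sub>v N" using that by auto
  qed
  have kp: "p \<in> mat_kernel C" and kq: "q \<in> mat_kernel C" using ker p q Mp Mq by auto
  obtain B where B: "finite B" "K.basis B" using kernel_basis_exists[OF C] by blast
  have fd: "K.Ker.fin_dim" using B unfolding K.Ker.fin_dim_def K.Ker.basis_def by auto
  have pq: "p \<noteq> q" using pi qi by auto
  have li: "K.lin_indpt {p, q}"
  proof
    assume "K.lin_dep {p, q}"
    then obtain U c v where U: "finite U" "U \<subseteq> {p,q}" and lc: "K.lincomb c U = 0\<^sub>v N"
      and v: "v \<in> U" "c v \<noteq> 0"
      unfolding K.Ker.lin_dep_def by auto
    have Uk: "U \<subseteq> mat_kernel C" using U kp kq by auto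
    have e: "sum (\<lambda>x. c x * x $ k) U = 0" if "k < N" for k
      using K.lincomb_index[OF that Uk, of c] lc that by simp
    have "U = {p} \<or> U = {q} \<or> U = {p,q} \<or> U = {}" using U by blast
    then show False
    proof (elim disjE)
      assume "U = {p}" then show False using e[OF i] v pi by auto
    next
      assume "U = {q}" then show False using e[OF j] v qj by auto
    next
      assume u: "U = {p,q}"
      have "c p = 0" using e[OF i] pi qi pq u by auto
      moreover have "c q = 0" using e[OF j] qj pj pq u by auto
      ultimately show False using v u by auto
    qed (use v in auto)
  qed
  have "card {p,q} \<le> K.Ker.dim" by (rule K.Ker.li_le_dim(2)[OF fd _ li]) (use kp kq in auto)
  then show False using pq dimle by auto
qed


lemma sum_split2: fixes n :: nat shows "(\<Sum>l<n+n. f l) = (\<Sum>l<n. f l) + (\<Sum>l<n. f (l+n)::real)"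
proof -
  have "{..<n+n} = {..<n} \<union> {n..<n+n}" by auto
  then have "(\<Sum>l<n+n. f l) = (\<Sum>l<n. f l) + (\<Sum>l\<in>{n..<n+n}. f l)"
    by (simp add: sum.union_disjoint ivl_disj_int)
  also have "(\<Sum>l\<in>{n..<n+n}. f l) = (\<Sum>l<n. f (l+n))"
    using sum.shift_bounds_nat_ivl[of f 0 n n] by (simp add: lessThan_atLeast0)
  finally show ?thesis .
qed

lemma abs_fixed:
  fixes P :: "real mat"
  assumes nn: "\<And>k l. k < N \<Longrightarrow> l < N \<Longrightarrow> P $$ (k,l) \<ge> 0"
    and rs: "\<And>k. k < N \<Longrightarrow> (\<Sum>l<N. P $$ (k,l)) = 1"
    and fx: "\<And>l. l < N \<Longrightarrow> (\<Sum>k<N. P $$ (k,l) * a k) = a l"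
  shows "\<And>l. l < N \<Longrightarrow> (\<Sum>k<N. P $$ (k,l) * \<bar>a k\<bar>) = \<bar>a l\<bar>"
proof -
  define b where "b l = (\<Sum>k<N. P $$ (k,l) * \<bar>a k\<bar>)" for l
  have le: "\<bar>a l\<bar> \<le> b l" if "l < N" for l
  proof -
    have "\<bar>a l\<bar> = \<bar>\<Sum>k<N. P $$ (k,l) * a k\<bar>" using fx[OF that] by simp
    also have "\<dots> \<le> (\<Sum>k<N. \<bar>P $$ (k,l) * a k\<bar>)" by (rule sum_abs)
    also have "\<dots> = b l" unfolding b_def
      by (rule sum.cong) (use nn that in \<open>auto simp: abs_mult\<close>)
    finally show ?thesis .
  qed
  have "(\<Sum>l<N. b l) = (\<Sum>k<N. \<Sum>l<N. P $$ (k,l) * \<bar>a k\<bar>)"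
    unfolding b_def by (rule sum.swap)
  also have "\<dots> = (\<Sum>k<N. \<bar>a k\<bar> * (\<Sum>l<N. P $$ (k,l)))"
    by (simp add: sum_distrib_left mult.commute)
  also have "\<dots> = (\<Sum>k<N. \<bar>a k\<bar>)" using rs by simp
  finally have "(\<Sum>l<N. b l - \<bar>a l\<bar>) = 0" by (simp add: sum_subtractf)
  then have "\<forall>l\<in>{..<N}. b l - \<bar>a l\<bar> = 0"
    by (subst sum_nonneg_eq_0_iff[symmetric]) (use le in auto)
  then show "\<And>l. l < N \<Longrightarrow> (\<Sum>k<N. P $$ (k,l) * \<bar>a k\<bar>) = \<bar>a l\<bar>"
    unfolding b_def by auto
qed

lemma sde_entry:
  assumes A: "A \<in> carrier_mat n n" and k: "k < 2*n" and l: "l < 2*n"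
  shows "A_sde A $$ (k,l) = (if l < n then max (row_weight A (k mod n) * A $$ (k mod n, l)) 0
          else max (- (row_weight A (k mod n) * A $$ (k mod n, l - n))) 0)"
proof -
  have km: "k mod n = (if k < n then k else k - n)" using k
    by (simp add: mod_if le_mod_geq)
  show ?thesis using A k l km
    unfolding A_sde_def A_tilde_plus_def A_tilde_minus_def A_tilde_def
    by (auto simp: index_mat_four_block)
qed

lemma sde_carrier: "A \<in> carrier_mat n n \<Longrightarrow> A_sde A \<in> carrier_mat (2*n) (2*n)"
  unfolding A_sde_def A_tilde_plus_def A_tilde_minus_def A_tilde_def
  by (auto simp: mult_2)

theorem lemma1:
  fixes A :: "real mat" and n :: nat and a :: "real vec"
  assumes A_dim: "A \<in> carrier_mat n n"
    and no_zero_row: "\<forall>i<n. \<exists>j<n. A $$ (i,j) \<noteq> 0"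
    and simple1: "simple_eigenvalue (map_mat complex_of_real (A_sde A)) 1"
    and others: "\<forall>z. eigenvalue (map_mat complex_of_real (A_sde A)) z \<longrightarrow> z \<noteq> 1 \<longrightarrow> cmod z < 1"
    and a_dim: "a \<in> carrier_vec (2*n)"
    and a_left: "transpose_mat (A_sde A) *\<^sub>v a = a"
    and a_sum: "(\<Sum>k<2*n. a $ k) = 1"
  shows "0 < Min {row_weight A i | i. i < n}
       \<and> Min {row_weight A i | i. i < n} \<le> a \<bullet> vec (2*n) (\<lambda>k. row_weight A (k mod n))
       \<and> a \<bullet> vec (2*n) (\<lambda>k. row_weight A (k mod n)) \<le> Max {row_weight A i | i. i < n}"
proof -
  define N where "N = 2*n"
  define P where "P = A_sde A"
  define w where "w = row_weight A"
  have P: "P \<in> carrier_mat N N" unfolding P_def N_def by (rule sde_carrier[OF A_dim])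
  have npos: "n > 0" using a_sum by (cases n) auto
  have wpos: "w i > 0" if i: "i < n" for i
  proof -
    obtain j where j: "j < n" "A $$ (i,j) \<noteq> 0" using no_zero_row i by auto
    have "0 < \<bar>A $$ (i,j)\<bar>" using j by simp
    also have "\<dots> \<le> (\<Sum>j<n. \<bar>A $$ (i,j)\<bar>)"
      by (rule member_le_sum) (use j in auto)
    finally show ?thesis unfolding w_def row_weight_def using A_dim by simp
  qed
  have wabs: "w i * (\<Sum>j<n. \<bar>A $$ (i,j)\<bar>) = 1" if "i < n" for i
  proof -
    have "(\<Sum>j<n. \<bar>A $$ (i,j)\<bar>) \<noteq> 0" using wpos[OF that] unfolding w_def row_weight_def
      using A_dim by auto
    then show ?thesis unfolding w_def row_weight_def using A_dim by simp
  qed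
  have nn: "P $$ (k,l) \<ge> 0" if "k < N" "l < N" for k l
    using sde_entry[OF A_dim, of k l] that unfolding P_def N_def by auto
  have rs: "(\<Sum>l<N. P $$ (k,l)) = 1" if k: "k < N" for k
  proof -
    define i where "i = k mod n"
    have i: "i < n" unfolding i_def using npos by simp
    have "(\<Sum>l<N. P $$ (k,l)) = (\<Sum>l<n. P $$ (k,l)) + (\<Sum>l<n. P $$ (k,l+n))"
      unfolding N_def mult_2 by (rule sum_split2)
    also have "\<dots> = (\<Sum>l<n. max (w i * A $$ (i, l)) 0 + max (- (w i * A $$ (i, l))) 0)"
      unfolding sum.distrib
      using sde_entry[OF A_dim, of k] k unfolding P_def N_def i_def w_def
      by (intro arg_cong2[where f="(+)"] sum.cong) auto
    also have "\<dots> = (\<Sum>l<n. w i * \<bar>A $$ (i, l)\<bar>)"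
      by (rule sum.cong) (use wpos[OF i] in \<open>auto simp: max_def abs_if zero_le_mult_iff mult_le_0_iff\<close>)
    also have "\<dots> = 1" using wabs[OF i] by (simp add: sum_distrib_left)
    finally show ?thesis .
  qed
  have fixa: "(\<Sum>k<N. P $$ (k,l) * a $ k) = a $ l" if "l < N" for l
  proof -
    have "a $ l = (transpose_mat P *\<^sub>v a) $ l" using a_left unfolding P_def by simp
    also have "\<dots> = (\<Sum>k<N. P $$ (k,l) * a $ k)"
      using P a_dim that unfolding N_def
      by (auto simp: scalar_prod_def lessThan_atLeast0 row_transpose intro!: sum.cong)
    finally show ?thesis by simp
  qed
  have absa: "(\<Sum>k<N. P $$ (k,l) * \<bar>a $ k\<bar>) = \<bar>a $ l\<bar>" if "l < N" for l
    by (rule abs_fixed[of N P "\<lambda>k. a $ k", OF nn rs fixa that])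
  have pm: "(\<Sum>k<N. P $$ (k,l) * max (s * a $ k) 0) = max (s * a $ l) 0"
    if l: "l < N" and s: "s = 1 \<or> s = -1" for l s
  proof -
    have "(\<Sum>k<N. P $$ (k,l) * max (s * a $ k) 0)
        = (\<Sum>k<N. (P $$ (k,l) * \<bar>a $ k\<bar> + s * (P $$ (k,l) * a $ k)) / 2)"
      by (rule sum.cong) (use s in \<open>auto simp: max_def abs_if field_simps\<close>)
    also have "\<dots> = ((\<Sum>k<N. P $$ (k,l) * \<bar>a $ k\<bar>) + s * (\<Sum>k<N. P $$ (k,l) * a $ k)) / 2"
      by (simp add: sum_divide_distrib[symmetric] sum.distrib sum_distrib_left)
    also have "\<dots> = (\<bar>a $ l\<bar> + s * a $ l) / 2" using absa[OF l] fixa[OF l] by simp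
    also have "\<dots> = max (s * a $ l) 0" using s by (auto simp: max_def abs_if)
    finally show ?thesis .
  qed
  have Pv: "transpose_mat P *\<^sub>v v = v"
    if v: "v \<in> carrier_vec N" and h: "\<And>l. l < N \<Longrightarrow> (\<Sum>k<N. P $$ (k,l) * v $ k) = v $ l" for v
  proof (rule eq_vecI)
    show "dim_vec (transpose_mat P *\<^sub>v v) = dim_vec v" using P v by simp
    fix l assume "l < dim_vec v"
    then have l: "l < N" using v by simp
    have "(transpose_mat P *\<^sub>v v) $ l = (\<Sum>k<N. P $$ (k,l) * v $ k)"
      using P v l by (auto simp: scalar_prod_def lessThan_atLeast0 row_transpose intro!: sum.cong)
    then show "(transpose_mat P *\<^sub>v v) $ l = v $ l" using h[OF l] by simp
  qed
  have pp: "(\<Sum>k<N. P $$ (k,l) * max (a $ k) 0) = max (a $ l) 0" if "l < N" for l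
    using pm[of l 1] that by simp
  have pn: "(\<Sum>k<N. P $$ (k,l) * max (- a $ k) 0) = max (- a $ l) 0" if "l < N" for l
    using pm[of l "-1"] that by simp
  define ap where "ap = vec N (\<lambda>k. max (a $ k) 0)"
  define am where "am = vec N (\<lambda>k. max (- a $ k) 0)"
  have ap: "ap \<in> carrier_vec N" "transpose_mat P *\<^sub>v ap = ap"
    unfolding ap_def by (auto intro!: Pv simp: pp pn)
  have am: "am \<in> carrier_vec N" "transpose_mat P *\<^sub>v am = am"
    unfolding am_def by (auto intro!: Pv simp: pp pn)
  define M where "M = map_mat complex_of_real (transpose_mat P)"
  have M: "M \<in> carrier_mat N N" using P unfolding M_def by simp
  have ordM: "Polynomial.order 1 (char_poly M) = 1"
  proof -
    have "M = transpose_mat (map_mat complex_of_real P)" unfolding M_def by (simp add: map_mat_transpose)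
    then have "char_poly M = char_poly (map_mat complex_of_real P)"
      using P by (simp add: char_poly_transpose_mat[of _ N])
    then show ?thesis using simple1 unfolding simple_eigenvalue_def P_def by simp
  qed
  have Mv: "M *\<^sub>v map_vec complex_of_real v = map_vec complex_of_real v"
    if "v \<in> carrier_vec N" "transpose_mat P *\<^sub>v v = v" for v
  proof -
    have "M *\<^sub>v map_vec complex_of_real v = map_vec complex_of_real (transpose_mat P *\<^sub>v v)"
      unfolding M_def by (rule of_real_hom.mult_mat_vec_hom[symmetric]) (use P that in auto)
    then show ?thesis using that by simp
  qed
  have anonneg: "a $ k \<ge> 0" if k: "k < N" for k
  proof (rule ccontr)
    assume "\<not> a $ k \<ge> 0"
    then have ak: "a $ k < 0" by simp
    have "\<exists>i<N. a $ i > 0"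
    proof (rule ccontr)
      assume "\<not> (\<exists>i<N. a $ i > 0)"
      then have "(\<Sum>k<N. a $ k) \<le> (\<Sum>k<N. 0)" by (intro sum_mono) auto
      then show False using a_sum unfolding N_def by simp
    qed
    then obtain i where i: "i < N" "a $ i > 0" by blast
    show False
      by (rule two_indep_false[OF M ordM _ _ Mv[OF ap] Mv[OF am] i(1) k])
        (use ap am i ak k in \<open>auto simp: ap_def am_def\<close>)
  qed
  define S where "S = {row_weight A i | i. i < n}"
  have S: "S = w ` {..<n}" unfolding S_def w_def by auto
  have Sf: "finite S" "S \<noteq> {}" using S npos by auto
  have Spos: "0 < Min S" using Sf wpos by (auto simp: S)
  have wmem: "w (k mod n) \<in> S" for k using npos by (auto simp: S)
  have dot: "a \<bullet> vec (2*n) (\<lambda>k. row_weight A (k mod n)) = (\<Sum>k<N. a $ k * w (k mod n))"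
    unfolding scalar_prod_def N_def w_def by (auto simp: lessThan_atLeast0 intro!: sum.cong)
  have "Min S = (\<Sum>k<N. a $ k * Min S)" using a_sum unfolding N_def by (simp add: sum_distrib_right[symmetric])
  also have "\<dots> \<le> (\<Sum>k<N. a $ k * w (k mod n))"
    by (intro sum_mono mult_left_mono) (use Sf wmem anonneg in auto)
  finally have lo: "Min S \<le> (\<Sum>k<N. a $ k * w (k mod n))" .
  have "(\<Sum>k<N. a $ k * w (k mod n)) \<le> (\<Sum>k<N. a $ k * Max S)"
    by (intro sum_mono mult_left_mono) (use Sf wmem anonneg in auto)
  also have "\<dots> = Max S" using a_sum unfolding N_def by (simp add: sum_distrib_right[symmetric])
  finally have hi: "(\<Sum>k<N. a $ k * w (k mod n)) \<le> Max S" .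
  show ?thesis using Spos lo hi dot unfolding S_def by simp
qed

end
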